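(* Let $n\ge0$ and let $I$ be one of the sets $\{a^nb,a\}$, $\{a^nb,b\}$, $\{b^na,a\}$, $\{b^na,b\}$, $\{ba^n,a\}$, $\{ba^n,b\}$, $\{ab^n,a\}$, $\{ab^n,b\}$, $\{a^nb,a^n\}$, $\{ba^n,a^n\}$, $\{b^na,b^n\}$, $\{ab^n,b^n\}$. Then $\vdash_I^*$ is a well quasi-order on $L^{\epsilon}_{\vdash_I}$.
   Context: For words $u,v$, the shuffle $u \sqcup\!\sqcup v$ is the set of all words $u_1v_1\cdots u_kv_k$ with $k\ge 1$, $u=u_1\cdots u_k$, $v=v_1\cdots v_k$ (pieces possibly empty). For a finite set $I$ of words, $v \vdash_I w$ means $w \in v \sqcup\!\sqcup u$ for some $u\in I$; $\vdash_I^*$ is its reflexive-transitive closure and $L^{\epsilon}_{\vdash_I}=\{w : \epsilon \vdash_I^* w\}$. A quasi-order $\le$ on $S$ is a well quasi-order iff every infinite sequence $s_1,s_2,\dots$ in $S$ has $i<j$ with $s_i\le s_j$. *)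

theory Defs
  imports Main
begin

datatype letter = a | b

type_synonym word = "letter list"

definition shuffle :: "word \<Rightarrow> word \<Rightarrow> word set" where
  "shuffle u v = {w. \<exists>us vs. length us = length vs \<and> length us \<ge> 1 \<and>
      concat us = u \<and> concat vs = v \<and> w = concat (map (\<lambda>(x, y). x @ y) (zip us vs))}"

definition step :: "word set \<Rightarrow> word \<Rightarrow> word \<Rightarrow> bool" where
  "step I v w \<longleftrightarrow> (\<exists>u\<in>I. w \<in> shuffle v u)"

definition derives :: "word set \<Rightarrow> word \<Rightarrow> word \<Rightarrow> bool" where
  "derives I = (step I)\<^sup>*\<^sup>*"

definition lang_eps :: "word set \<Rightarrow> word set" where
  "lang_eps I = {w. derives I [] w}"

definition wqo_on :: "('x \<Rightarrow> 'x \<Rightarrow> bool) \<Rightarrow> 'x set \<Rightarrow> bool" where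
  "wqo_on le S \<longleftrightarrow>
     (\<forall>x\<in>S. le x x) \<and> (\<forall>x\<in>S. \<forall>y\<in>S. \<forall>z\<in>S. le x y \<longrightarrow> le y z \<longrightarrow> le x z) \<and>
     (\<forall>s :: nat \<Rightarrow> 'x. (\<forall>i. s i \<in> S) \<longrightarrow> (\<exists>i j. i < j \<and> le (s i) (s j)))"

end

theory Submission
  imports Defs "HOL-Library.Ramsey" "HOL-Library.Infinite_Set"
begin


lemma shuffles_Nil2[simp]: "shuffles xs [] = {xs}"
  by (cases xs) auto

lemma shuffles_append_mem:
  "w1 \<in> shuffles v1 u1 \<Longrightarrow> w2 \<in> shuffles v2 u2 \<Longrightarrow> w1 @ w2 \<in> shuffles (v1 @ v2) (u1 @ u2)"
proof (induction w1 arbitrary: v1 u1)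
  case Nil
  then show ?case by simp
next
  case (Cons c w1)
  from Cons.prems(1)[unfolded Cons_in_shuffles_iff] show ?case
  proof (elim disjE)
    assume h: "v1 \<noteq> [] \<and> hd v1 = c \<and> w1 \<in> shuffles (tl v1) u1"
    then obtain v1' where v1: "v1 = c # v1'" by (cases v1) auto
    with h have "w1 \<in> shuffles v1' u1" by simp
    from Cons.IH[OF this Cons.prems(2)] v1 show ?thesis
      by (simp add: Cons_in_shuffles_leftI)
  next
    assume h: "u1 \<noteq> [] \<and> hd u1 = c \<and> w1 \<in> shuffles v1 (tl u1)"
    then obtain u1' where u1: "u1 = c # u1'" by (cases u1) auto
    with h have "w1 \<in> shuffles v1 u1'" by simp
    from Cons.IH[OF this Cons.prems(2)] u1 show ?thesis
      by (simp add: Cons_in_shuffles_rightI)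
  qed
qed

lemma append_in_shuffles: "x @ y \<in> shuffles x y"
  by (induction x) (auto intro: Cons_in_shuffles_leftI)

lemma self_in_shuffles1: "x \<in> shuffles x []" by simp
lemma self_in_shuffles2: "x \<in> shuffles [] x" by simp

lemma shuffle_eq_shuffles: "shuffle v u = shuffles v u"
proof
  show "shuffle v u \<subseteq> shuffles v u"
  proof
    fix w assume "w \<in> shuffle v u"
    then obtain us vs where l: "length us = length vs" and c: "concat us = v" "concat vs = u"
      and w: "w = concat (map (\<lambda>(x, y). x @ y) (zip us vs))"
      unfolding shuffle_def by blast
    have "concat (map (\<lambda>(x, y). x @ y) (zip us vs)) \<in> shuffles (concat us) (concat vs)"
      using l
    proof (induction us vs rule: list_induct2)
      case Nil then show ?case by simp
    next
      case (Cons x xs y ys)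
      then show ?case
        using shuffles_append_mem[OF append_in_shuffles[of x y] Cons.IH] by simp
    qed
    then show "w \<in> shuffles v u" using w c by simp
  qed
next
  show "shuffles v u \<subseteq> shuffle v u"
  proof
    fix w assume "w \<in> shuffles v u"
    then have "\<exists>us vs. length us = length vs \<and> length us \<ge> 1 \<and>
      concat us = v \<and> concat vs = u \<and> w = concat (map (\<lambda>(x, y). x @ y) (zip us vs))"
    proof (induction w arbitrary: v u)
      case Nil
      then have "v = []" "u = []" by auto
      then show ?case by (intro exI[of _ "[[]]"]) auto
    next
      case (Cons c w)
      from Cons.prems[unfolded Cons_in_shuffles_iff] show ?case
      proof (elim disjE)
        assume h: "v \<noteq> [] \<and> hd v = c \<and> w \<in> shuffles (tl v) u"
        then obtain v' where v: "v = c # v'" by (cases v) auto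
        with h have "w \<in> shuffles v' u" by simp
        from Cons.IH[OF this] obtain us vs where
          "length us = length vs" "length us \<ge> 1" "concat us = v'" "concat vs = u"
          "w = concat (map (\<lambda>(x, y). x @ y) (zip us vs))" by blast
        then show ?thesis using v
          by (intro exI[of _ "[c] # us"] exI[of _ "[] # vs"]) auto
      next
        assume h: "u \<noteq> [] \<and> hd u = c \<and> w \<in> shuffles v (tl u)"
        then obtain u' where u: "u = c # u'" by (cases u) auto
        with h have "w \<in> shuffles v u'" by simp
        from Cons.IH[OF this] obtain us vs where
          "length us = length vs" "length us \<ge> 1" "concat us = v" "concat vs = u'"
          "w = concat (map (\<lambda>(x, y). x @ y) (zip us vs))" by blast
        then show ?thesis using u
          by (intro exI[of _ "[] # us"] exI[of _ "[c] # vs"]) auto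
      qed
    qed
    then show "w \<in> shuffle v u" unfolding shuffle_def by blast
  qed
qed

lemma shuffles_assoc:
  "w \<in> shuffles v u \<Longrightarrow> u \<in> shuffles u' i \<Longrightarrow> \<exists>w'. w' \<in> shuffles v u' \<and> w \<in> shuffles w' i"
proof (induction w arbitrary: v u u' i)
  case Nil
  then show ?case by auto
next
  case (Cons c w1)
  from Cons.prems(1)[unfolded Cons_in_shuffles_iff] show ?case
  proof (elim disjE)
    assume h: "v \<noteq> [] \<and> hd v = c \<and> w1 \<in> shuffles (tl v) u"
    then obtain v1 where v: "v = c # v1" by (cases v) auto
    with h have "w1 \<in> shuffles v1 u" by simp
    from Cons.IH[OF this Cons.prems(2)] obtain w1' where
      "w1' \<in> shuffles v1 u'" "w1 \<in> shuffles w1' i" by blast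
    then have "c # w1' \<in> shuffles v u'" "c # w1 \<in> shuffles (c # w1') i"
      using v by (metis Cons_in_shuffles_leftI)+
    then show ?thesis by blast
  next
    assume h: "u \<noteq> [] \<and> hd u = c \<and> w1 \<in> shuffles v (tl u)"
    then obtain u1 where u: "u = c # u1" by (cases u) auto
    with h have w1: "w1 \<in> shuffles v u1" by simp
    from Cons.prems(2) u have "c # u1 \<in> shuffles u' i" by simp
    then show ?thesis unfolding Cons_in_shuffles_iff[of c u1]
    proof (elim disjE)
      assume h2: "u' \<noteq> [] \<and> hd u' = c \<and> u1 \<in> shuffles (tl u') i"
      then obtain u'' where u': "u' = c # u''" by (cases u') auto
      with h2 have "u1 \<in> shuffles u'' i" by simp
      from Cons.IH[OF w1 this] obtain w1' where
        "w1' \<in> shuffles v u''" "w1 \<in> shuffles w1' i" by blast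
      then have "c # w1' \<in> shuffles v u'" "c # w1 \<in> shuffles (c # w1') i"
        using u' by (metis Cons_in_shuffles_leftI Cons_in_shuffles_rightI)+
      then show ?thesis by blast
    next
      assume h2: "i \<noteq> [] \<and> hd i = c \<and> u1 \<in> shuffles u' (tl i)"
      then obtain i1 where i: "i = c # i1" by (cases i) auto
      with h2 have "u1 \<in> shuffles u' i1" by simp
      from Cons.IH[OF w1 this] obtain w1' where
        "w1' \<in> shuffles v u'" "w1 \<in> shuffles w1' i1" by blast
      then have "w1' \<in> shuffles v u'" "c # w1 \<in> shuffles w1' i"
        using i by (metis Cons_in_shuffles_rightI)+
      then show ?thesis by blast
    qed
  qed
qed

lemma step_iff: "step I v w \<longleftrightarrow> (\<exists>u\<in>I. w \<in> shuffles v u)"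
  unfolding step_def shuffle_eq_shuffles by simp

lemma derives_refl[simp]: "derives I v v"
  unfolding derives_def by simp

lemma derives_trans: "derives I u v \<Longrightarrow> derives I v w \<Longrightarrow> derives I u w"
  unfolding derives_def by (rule rtranclp_trans)

lemma step_derives: "step I v w \<Longrightarrow> derives I v w"
  unfolding derives_def by simp

lemma step_ctx: "step I v w \<Longrightarrow> step I (p @ v @ s) (p @ w @ s)"
proof -
  assume "step I v w"
  then obtain u where u: "u \<in> I" "w \<in> shuffles v u" unfolding step_iff by blast
  have "p @ w @ s \<in> shuffles (p @ v @ s) ([] @ u @ [])"
    by (rule shuffles_append_mem[OF self_in_shuffles1 shuffles_append_mem[OF u(2) self_in_shuffles1]])
  then show ?thesis using u(1) unfolding step_iff by auto
qed

lemma derives_ctx: "derives I v w \<Longrightarrow> derives I (p @ v @ s) (p @ w @ s)"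
  unfolding derives_def
proof (induction rule: rtranclp_induct)
  case base then show ?case by simp
next
  case (step y z)
  then show ?case using step_ctx[of I y z p s] by (simp add: rtranclp.rtrancl_into_rtrancl)
qed

lemma derives_app: "derives I v v' \<Longrightarrow> derives I w w' \<Longrightarrow> derives I (v @ w) (v' @ w')"
  using derives_ctx[of I v v' "[]" w] derives_ctx[of I w w' v' "[]"]
  by (auto intro: derives_trans)

lemma derives_Cons: "derives I v v' \<Longrightarrow> derives I (c # v) (c # v')"
  using derives_ctx[of I v v' "[c]" "[]"] by simp

lemma derives_shuffle:
  assumes "derives I [] u" shows "w \<in> shuffles v u \<Longrightarrow> derives I v w"
  using assms unfolding derives_def
proof (induction arbitrary: v w rule: rtranclp_induct)
  case base then show ?case by simp
next
  case (step u1 u)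
  from step.hyps(2) obtain i where i: "i \<in> I" "u \<in> shuffles u1 i" unfolding step_iff by blast
  from shuffles_assoc[OF step.prems i(2)] obtain w' where
    w': "w' \<in> shuffles v u1" "w \<in> shuffles w' i" by blast
  have "(step I)\<^sup>*\<^sup>* v w'" by (rule step.IH[OF w'(1)])
  moreover have "step I w' w" using i(1) w'(2) unfolding step_iff by blast
  ultimately show ?case by simp
qed

lemma derives_insert: "derives I [] (p @ s) \<Longrightarrow> derives I v (p @ v @ s)"
  using derives_shuffle[of I "p @ s" "p @ v @ s" v]
    shuffles_append_mem[OF self_in_shuffles2[of p] append_in_shuffles[of v s]] by simp

lemma derives_from_I: "u \<in> I \<Longrightarrow> derives I [] u"
  by (rule step_derives) (auto simp: step_iff)

lemma derives_concat_map:
  assumes "\<And>x y. derives I x y \<Longrightarrow> derives I (f x) (f y)"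
  shows "list_all2 (derives I) ps qs \<Longrightarrow> derives I (concat (map f ps)) (concat (map f qs))"
  by (induction rule: list_all2_induct) (auto intro: derives_app assms)




definition afull :: "('x \<Rightarrow> 'x \<Rightarrow> bool) \<Rightarrow> 'x set \<Rightarrow> bool" where
  "afull rr A \<longleftrightarrow> (\<forall>f::nat \<Rightarrow> 'x. (\<forall>i. f i \<in> A) \<longrightarrow> (\<exists>i j. i < j \<and> rr (f i) (f j)))"

definition badseq :: "('x \<Rightarrow> 'x \<Rightarrow> bool) \<Rightarrow> 'x set \<Rightarrow> (nat \<Rightarrow> 'x) \<Rightarrow> bool" where
  "badseq rr A g \<longleftrightarrow> (\<forall>i. g i \<in> A) \<and> (\<forall>i j. i < j \<longrightarrow> \<not> rr (g i) (g j))"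

lemma afull_iff_no_bad: "afull rr A \<longleftrightarrow> \<not> (\<exists>g. badseq rr A g)"
  unfolding afull_def badseq_def by blast

lemma afull_subseq:
  fixes f :: "nat \<Rightarrow> 'x"
  assumes "afull rr A" "\<forall>i. f i \<in> A"
  shows "\<exists>\<phi>::nat \<Rightarrow> nat. strict_mono \<phi> \<and> (\<forall>i j. i < j \<longrightarrow> rr (f (\<phi> i)) (f (\<phi> j)))"
proof -
  define col where "col X = (if rr (f (Min X)) (f (Max X)) then 0 else Suc 0)" for X :: "nat set"
  have part: "\<forall>x\<in>(UNIV::nat set). \<forall>y\<in>UNIV. x \<noteq> y \<longrightarrow> col {x, y} < 2"
    by (simp add: col_def)
  have "\<exists>Y t. Y \<subseteq> UNIV \<and> infinite Y \<and> t < 2 \<and> (\<forall>x\<in>Y. \<forall>y\<in>Y. x \<noteq> y \<longrightarrow> col {x, y} = t)"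
    by (rule Ramsey2[OF infinite_UNIV_nat part])
  then obtain Y t where Y: "Y \<subseteq> UNIV" "infinite Y" "t < 2"
    and hom: "\<forall>x\<in>Y. \<forall>y\<in>Y. x \<noteq> y \<longrightarrow> col {x, y} = t"
    by (elim exE conjE)
  define \<phi> where "\<phi> = enumerate Y"
  have sm: "strict_mono \<phi>" unfolding \<phi>_def using Y(2) by (rule strict_mono_enumerate)
  have inY: "\<phi> i \<in> Y" for i unfolding \<phi>_def using Y(2) by (rule enumerate_in_set)
  have colij: "col {\<phi> i, \<phi> j} = (if rr (f (\<phi> i)) (f (\<phi> j)) then 0 else Suc 0)" if "i < j" for i j
  proof -
    have "\<phi> i < \<phi> j" using sm that by (simp add: strict_mono_less)
    then have "Min {\<phi> i, \<phi> j} = \<phi> i" "Max {\<phi> i, \<phi> j} = \<phi> j" by auto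
    then show ?thesis by (simp add: col_def)
  qed
  have lt: "\<phi> i < \<phi> j" if "i < j" for i j using sm that by (simp add: strict_mono_less)
  have colt: "col {\<phi> i, \<phi> j} = t" if "i < j" for i j
  proof -
    have "\<phi> i \<noteq> \<phi> j" using lt[OF that] by simp
    then show ?thesis using hom inY[of i] inY[of j] by blast
  qed
  show ?thesis
  proof (cases "t = 0")
    case True
    have "rr (f (\<phi> i)) (f (\<phi> j))" if "i < j" for i j
      using colij[OF that] colt[OF that] True by (simp split: if_splits)
    then show ?thesis using sm by (intro exI[of _ \<phi>]) simp
  next
    case False
    have "\<not> rr (f (\<phi> i)) (f (\<phi> j))" if "i < j" for i j
      using colij[OF that] colt[OF that] False by (simp split: if_splits)
    then have "badseq rr A (f \<circ> \<phi>)" unfolding badseq_def using assms(2) by simp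
    then have False using assms(1) unfolding afull_iff_no_bad by blast
    then show ?thesis by simp
  qed
qed

lemma afull_lists:
  assumes "afull rr A"
  shows "afull (list_all2 rr) {xs. length xs = k \<and> set xs \<subseteq> A}"
proof (induction k)
  case 0
  show ?case unfolding afull_def
  proof (intro allI impI)
    fix f :: "nat \<Rightarrow> 'a list" assume "\<forall>i. f i \<in> {xs. length xs = 0 \<and> set xs \<subseteq> A}"
    then have "f 0 = []" "f 1 = []" by auto
    then show "\<exists>i j. i < j \<and> list_all2 rr (f i) (f j)" by (intro exI[of _ 0] exI[of _ 1]) simp
  qed
next
  case (Suc k)
  show ?case unfolding afull_def
  proof (intro allI impI)
    fix f :: "nat \<Rightarrow> 'a list" assume f: "\<forall>i. f i \<in> {xs. length xs = Suc k \<and> set xs \<subseteq> A}"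
    have ne: "f i \<noteq> []" for i using f[rule_format, of i] by auto
    have fi: "f i = hd (f i) # tl (f i)" for i using ne[of i] by (rule list.collapse[symmetric])
    have hA: "\<forall>i. hd (f i) \<in> A"
    proof
      fix i
      have "hd (f i) \<in> set (f i)" using ne[of i] by (rule hd_in_set)
      moreover have "set (f i) \<subseteq> A" using f[rule_format, of i] by simp
      ultimately show "hd (f i) \<in> A" by blast
    qed
    obtain \<phi> :: "nat \<Rightarrow> nat" where \<phi>: "strict_mono \<phi>" "\<forall>i j. i < j \<longrightarrow> rr (hd (f (\<phi> i))) (hd (f (\<phi> j)))"
      using afull_subseq[OF assms hA] by blast
    have tls: "\<forall>i. tl (f (\<phi> i)) \<in> {xs. length xs = k \<and> set xs \<subseteq> A}"
    proof
      fix i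
      have "length (f (\<phi> i)) = Suc k" "set (f (\<phi> i)) \<subseteq> A" using f by auto
      moreover have "set (tl (f (\<phi> i))) \<subseteq> set (f (\<phi> i))" by (rule list.set_sel(2)[OF ne, THEN subsetI]) 
      ultimately show "tl (f (\<phi> i)) \<in> {xs. length xs = k \<and> set xs \<subseteq> A}" by auto
    qed
    have "\<exists>i j. i < j \<and> list_all2 rr (tl (f (\<phi> i))) (tl (f (\<phi> j)))"
      using Suc.IH[unfolded afull_def, rule_format, of "\<lambda>i. tl (f (\<phi> i))"] tls by simp
    then obtain i j where ij: "i < j" "list_all2 rr (tl (f (\<phi> i))) (tl (f (\<phi> j)))"
      by blast
    have "list_all2 rr (hd (f (\<phi> i)) # tl (f (\<phi> i))) (hd (f (\<phi> j)) # tl (f (\<phi> j)))"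
      using ij \<phi>(2) by simp
    then have "list_all2 rr (f (\<phi> i)) (f (\<phi> j))"
      by (simp only: fi[of "\<phi> i", symmetric] fi[of "\<phi> j", symmetric])
    moreover have "\<phi> i < \<phi> j" using \<phi>(1) ij(1) by (simp add: strict_mono_less)
    ultimately show "\<exists>i j. i < j \<and> list_all2 rr (f i) (f j)" by blast
  qed
qed

lemma pigeon_subseq:
  fixes g :: "nat \<Rightarrow> 'k"
  assumes "finite K" "\<forall>i. g i \<in> K"
  shows "\<exists>k (\<phi>::nat \<Rightarrow> nat). strict_mono \<phi> \<and> (\<forall>i. g (\<phi> i) = k)"
proof -
  have "(UNIV :: nat set) = (\<Union>k\<in>K. {i. g i = k})" using assms(2) by auto
  then have "\<exists>k\<in>K. infinite {i. g i = k}"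
  proof -
    assume U: "(UNIV :: nat set) = (\<Union>k\<in>K. {i. g i = k})"
    show ?thesis
    proof (rule ccontr)
      assume "\<not> (\<exists>k\<in>K. infinite {i. g i = k})"
      then have "finite (\<Union>k\<in>K. {i. g i = k})" using assms(1) by auto
      then show False using U infinite_UNIV_nat by simp
    qed
  qed
  then obtain k where k: "infinite {i. g i = k}" by blast
  have "\<forall>n. g (enumerate {i. g i = k} n) = k" using enumerate_in_set[OF k] by simp
  then show ?thesis using strict_mono_enumerate[OF k] by blast
qed

subsection \<open>Minimal bad sequences\<close>

definition extB :: "('x \<Rightarrow> 'x \<Rightarrow> bool) \<Rightarrow> 'x set \<Rightarrow> 'x list \<Rightarrow> (nat \<Rightarrow> 'x) set" where
  "extB rr A p = {g. badseq rr A g \<and> (\<forall>j<length p. g j = p ! j)}"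

definition nxt :: "('x \<Rightarrow> 'x \<Rightarrow> bool) \<Rightarrow> 'x set \<Rightarrow> ('x \<Rightarrow> nat) \<Rightarrow> 'x list \<Rightarrow> (nat \<Rightarrow> 'x)" where
  "nxt rr A sz p = (SOME g. g \<in> extB rr A p \<and> (\<forall>g'\<in>extB rr A p. sz (g (length p)) \<le> sz (g' (length p))))"

fun pre :: "('x \<Rightarrow> 'x \<Rightarrow> bool) \<Rightarrow> 'x set \<Rightarrow> ('x \<Rightarrow> nat) \<Rightarrow> nat \<Rightarrow> 'x list" where
  "pre rr A sz 0 = []"
| "pre rr A sz (Suc i) = pre rr A sz i @ [nxt rr A sz (pre rr A sz i) i]"

lemma length_pre[simp]: "length (pre rr A sz i) = i"
  by (induction i) auto

lemma nxt_spec: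
  assumes "extB rr A p \<noteq> {}"
  shows "nxt rr A sz p \<in> extB rr A p \<and> (\<forall>g'\<in>extB rr A p. sz (nxt rr A sz p (length p)) \<le> sz (g' (length p)))"
proof -
  from assms obtain g0 where "g0 \<in> extB rr A p" by blast
  then obtain g where "g \<in> extB rr A p \<and> (\<forall>g'. g' \<in> extB rr A p \<longrightarrow> sz (g (length p)) \<le> sz (g' (length p)))"
    using ex_has_least_nat[of "\<lambda>g. g \<in> extB rr A p" g0 "\<lambda>g. sz (g (length p))"] by blast
  then have "\<exists>g. g \<in> extB rr A p \<and> (\<forall>g'\<in>extB rr A p. sz (g (length p)) \<le> sz (g' (length p)))" by blast
  then show ?thesis unfolding nxt_def by (rule someI_ex)
qed

lemma pre_nth: "j < i \<Longrightarrow> pre rr A sz i ! j = nxt rr A sz (pre rr A sz j) j"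
proof (induction i)
  case 0 then show ?case by simp
next
  case (Suc i)
  then show ?case by (cases "j < i") (auto simp: nth_append less_Suc_eq)
qed

lemma ext_pre:
  assumes "badseq rr A f"
  shows "extB rr A (pre rr A sz i) \<noteq> {}"
proof (induction i)
  case 0
  then show ?case using assms unfolding extB_def by auto
next
  case (Suc i)
  note s = nxt_spec[OF Suc.IH, of sz]
  let ?g = "nxt rr A sz (pre rr A sz i)"
  have "?g \<in> extB rr A (pre rr A sz (Suc i))"
    using s unfolding extB_def by (auto simp: nth_append less_Suc_eq)
  then show ?case by blast
qed

lemma minimal_bad:
  fixes sz :: "'x \<Rightarrow> nat"
  assumes "badseq rr A f"
  shows "\<exists>m. badseq rr A m \<and> (\<forall>i g. badseq rr A g \<and> (\<forall>j<i. g j = m j) \<longrightarrow> sz (m i) \<le> sz (g i))"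
proof -
  define m where "m j = nxt rr A sz (pre rr A sz j) j" for j
  have mpre: "pre rr A sz i ! j = m j" if "j < i" for i j
    using pre_nth[where rr=rr and A=A and sz=sz, OF that] unfolding m_def by simp
  have ex: "\<exists>g. badseq rr A g \<and> (\<forall>j<i. g j = m j)" for i
    using ext_pre[OF assms, of sz i] mpre unfolding extB_def by auto
  have bad: "badseq rr A m"
    unfolding badseq_def
  proof (intro conjI allI impI)
    fix i
    from ex[of "Suc i"] obtain g where "badseq rr A g" "\<forall>j<Suc i. g j = m j" by blast
    then show "m i \<in> A" unfolding badseq_def by (metis lessI)
  next
    fix i j :: nat assume ij: "i < j"
    from ex[of "Suc j"] obtain g where g: "badseq rr A g" "\<forall>k<Suc j. g k = m k" by blast
    then have "g i = m i" "g j = m j" using ij by auto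
    with g(1) ij show "\<not> rr (m i) (m j)" unfolding badseq_def by metis
  qed
  have "sz (m i) \<le> sz (g i)" if "badseq rr A g" "\<forall>j<i. g j = m j" for i g
  proof -
    have "g \<in> extB rr A (pre rr A sz i)" using that mpre unfolding extB_def by auto
    then show ?thesis using nxt_spec[OF ext_pre[OF assms, of sz i], of sz] unfolding m_def by auto
  qed
  with bad show ?thesis by blast
qed

theorem gen_wqo:
  fixes rr :: "'x \<Rightarrow> 'x \<Rightarrow> bool" and A :: "'x set" and sz :: "'x \<Rightarrow> nat"
    and cons :: "nat \<Rightarrow> 'x list \<Rightarrow> 'x" and ar :: "nat \<Rightarrow> nat" and K :: "nat set"
  assumes trans: "\<And>x y z. rr x y \<Longrightarrow> rr y z \<Longrightarrow> rr x z"
    and fin: "finite K"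
    and dec: "\<And>x. x \<in> A \<Longrightarrow> \<exists>k\<in>K. \<exists>ps. length ps = ar k \<and> set ps \<subseteq> A \<and> x = cons k ps \<and>
                 (\<forall>p\<in>set ps. sz p < sz x \<and> rr p x)"
    and mono: "\<And>k ps qs. list_all2 rr ps qs \<Longrightarrow> rr (cons k ps) (cons k qs)"
  shows "afull rr A"
proof (rule ccontr)
  assume "\<not> afull rr A"
  then obtain f where "badseq rr A f" unfolding afull_iff_no_bad by blast
  from minimal_bad[OF this, of sz] obtain m where
    mbad: "badseq rr A m" and mmin: "\<And>i g. badseq rr A g \<Longrightarrow> (\<forall>j<i. g j = m j) \<Longrightarrow> sz (m i) \<le> sz (g i)"
    by blast
  have "\<forall>x\<in>A. \<exists>kp. fst kp \<in> K \<and> length (snd kp) = ar (fst kp) \<and> set (snd kp) \<subseteq> A \<and> x = cons (fst kp) (snd kp) \<and>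
                 (\<forall>p\<in>set (snd kp). sz p < sz x \<and> rr p x)"
  proof
    fix x assume "x \<in> A"
    from dec[OF this] obtain k ps where "k \<in> K" "length ps = ar k" "set ps \<subseteq> A" "x = cons k ps"
      "\<forall>p\<in>set ps. sz p < sz x \<and> rr p x" by blast
    then show "\<exists>kp. fst kp \<in> K \<and> length (snd kp) = ar (fst kp) \<and> set (snd kp) \<subseteq> A \<and> x = cons (fst kp) (snd kp) \<and>
                 (\<forall>p\<in>set (snd kp). sz p < sz x \<and> rr p x)" by (intro exI[of _ "(k, ps)"]) simp
  qed
  from bchoice[OF this] obtain KP where KP0: "\<forall>x\<in>A. fst (KP x) \<in> K \<and> length (snd (KP x)) = ar (fst (KP x)) \<and> set (snd (KP x)) \<subseteq> A \<and>
      x = cons (fst (KP x)) (snd (KP x)) \<and> (\<forall>p\<in>set (snd (KP x)). sz p < sz x \<and> rr p x)"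
    by blast
  have KP: "fst (KP x) \<in> K \<and> length (snd (KP x)) = ar (fst (KP x)) \<and> set (snd (KP x)) \<subseteq> A \<and>
      x = cons (fst (KP x)) (snd (KP x)) \<and> (\<forall>p\<in>set (snd (KP x)). sz p < sz x \<and> rr p x)" if "x \<in> A" for x
    using KP0 that by blast
  define kd where "kd x = fst (KP x)" for x
  define pts where "pts x = snd (KP x)" for x
  have mA: "m i \<in> A" for i using mbad unfolding badseq_def by blast
  note KPm = KP[OF mA, folded kd_def pts_def]
  define S where "S = {p. \<exists>i. p \<in> set (pts (m i))}"
  have SA: "S \<subseteq> A" unfolding S_def using KPm by blast
  have afS: "afull rr S"
  proof (rule ccontr)
    assume "\<not> afull rr S"
    then obtain h where h: "badseq rr S h" unfolding afull_iff_no_bad by blast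
    have "\<forall>k. \<exists>i. h k \<in> set (pts (m i))" using h unfolding badseq_def S_def by blast
    from choice[OF this] obtain \<iota> where \<iota>0: "\<forall>k. h k \<in> set (pts (m (\<iota> k)))" by blast
    then have \<iota>: "h k \<in> set (pts (m (\<iota> k)))" for k by blast
    obtain k0 where k0: "\<And>k. \<iota> k0 \<le> \<iota> k"
      using ex_has_least_nat[of "\<lambda>_. True" 0 \<iota>] by blast
    define g where "g i = (if i < \<iota> k0 then m i else h (k0 + (i - \<iota> k0)))" for i
    have gbad: "badseq rr A g"
      unfolding badseq_def
    proof (intro conjI allI impI)
      fix i show "g i \<in> A" using mA h SA unfolding g_def badseq_def by auto
    next
      fix i j :: nat assume ij: "i < j"
      show "\<not> rr (g i) (g j)"
      proof (cases "j < \<iota> k0")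
        case True
        then show ?thesis using ij mbad unfolding g_def badseq_def by auto
      next
        case jF: False
        show ?thesis
        proof (cases "i < \<iota> k0")
          case True
          define k' where "k' = k0 + (j - \<iota> k0)"
          have gj: "g j = h k'" unfolding g_def k'_def using jF by simp
          have gi: "g i = m i" unfolding g_def using True by simp
          have hk: "rr (h k') (m (\<iota> k'))" using KPm \<iota>[of k'] by blast
          have "i < \<iota> k'" using True k0[of k'] by linarith
          then have "\<not> rr (m i) (m (\<iota> k'))" using mbad unfolding badseq_def by blast
          then show ?thesis using gi gj hk trans by metis
        next
          case False
          then have "k0 + (i - \<iota> k0) < k0 + (j - \<iota> k0)" using ij jF by linarith
          then show ?thesis using h False jF unfolding g_def badseq_def by auto
        qed
      qed
    qed
    have "sz (m (\<iota> k0)) \<le> sz (g (\<iota> k0))"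
      by (rule mmin[OF gbad]) (simp add: g_def)
    moreover have "g (\<iota> k0) = h k0" unfolding g_def by simp
    moreover have "sz (h k0) < sz (m (\<iota> k0))" using KPm \<iota>[of k0] by blast
    ultimately show False by simp
  qed
  obtain k and \<phi> :: "nat \<Rightarrow> nat" where \<phi>: "strict_mono \<phi>" "\<And>i. kd (m (\<phi> i)) = k"
    using pigeon_subseq[OF fin, of "\<lambda>i. kd (m i)"] KPm by blast
  have ptsS: "\<forall>i. pts (m (\<phi> i)) \<in> {xs. length xs = ar k \<and> set xs \<subseteq> S}"
    using KPm \<phi>(2) unfolding S_def by fastforce
  have "\<exists>i j. i < j \<and> list_all2 rr (pts (m (\<phi> i))) (pts (m (\<phi> j)))"
    using afull_lists[OF afS, of "ar k", unfolded afull_def, rule_format, of "\<lambda>i. pts (m (\<phi> i))"] ptsS by simp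
  then obtain i j where ij: "i < j" "list_all2 rr (pts (m (\<phi> i))) (pts (m (\<phi> j)))"
    by blast
  have e1: "m (\<phi> i) = cons k (pts (m (\<phi> i)))" using KPm[of "\<phi> i"] \<phi>(2)[of i] by simp
  have e2: "m (\<phi> j) = cons k (pts (m (\<phi> j)))" using KPm[of "\<phi> j"] \<phi>(2)[of j] by simp
  have "rr (m (\<phi> i)) (m (\<phi> j))"
    using mono[OF ij(2), of k] e1 e2 by simp
  moreover have "\<phi> i < \<phi> j" using \<phi>(1) ij(1) by (simp add: strict_mono_less)
  ultimately show False using mbad unfolding badseq_def by blast
qed




lemma lang_eps_Nil[simp]: "[] \<in> lang_eps I"
  unfolding lang_eps_def by simp

lemma framework:
  fixes I :: "word set" and P :: "word set" and cons :: "nat \<Rightarrow> word list \<Rightarrow> word"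
    and ar :: "nat \<Rightarrow> nat" and K :: "nat set"
  assumes finK: "finite K"
    and inv: "lang_eps I \<subseteq> P"
    and parse: "\<And>w. w \<in> P \<Longrightarrow> \<exists>k\<in>K. \<exists>ps. length ps = ar k \<and> w = cons k ps \<and> (\<forall>p\<in>set ps. p \<in> P \<and> length p < length w)"
    and skel: "\<And>k. k \<in> K \<Longrightarrow> derives I [] (cons k (replicate (ar k) []))"
    and mono: "\<And>k ps qs. list_all2 (derives I) ps qs \<Longrightarrow> derives I (cons k ps) (cons k qs)"
    and splt: "\<And>k ps i. k \<in> K \<Longrightarrow> length ps = ar k \<Longrightarrow> i < length ps \<Longrightarrow>
                 \<exists>pre suf. cons k ps = pre @ ps ! i @ suf \<and> pre @ suf = cons k (ps[i := []])"
  shows "wqo_on (derives I) (lang_eps I)"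
proof -
  have closed: "cons k ps \<in> lang_eps I" if "k \<in> K" "length ps = ar k" "\<forall>p\<in>set ps. p \<in> lang_eps I" for k ps
  proof -
    have "list_all2 (derives I) (replicate (ar k) []) ps"
      using that(2,3) by (auto simp: list_all2_conv_all_nth lang_eps_def)
    then have "derives I (cons k (replicate (ar k) [])) (cons k ps)" by (rule mono)
    then show ?thesis using skel[OF that(1)] unfolding lang_eps_def by (auto intro: derives_trans)
  qed
  have PL: "w \<in> lang_eps I" if "w \<in> P" for w
    using that
  proof (induction "length w" arbitrary: w rule: less_induct)
    case less
    from parse[OF less.prems] obtain k ps where k: "k \<in> K" "length ps = ar k" "w = cons k ps"
      "\<forall>p\<in>set ps. p \<in> P \<and> length p < length w" by blast
    then have "\<forall>p\<in>set ps. p \<in> lang_eps I" using less.hyps by blast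
    then show ?case using closed k by simp
  qed
  have dec: "\<exists>k\<in>K. \<exists>ps. length ps = ar k \<and> set ps \<subseteq> lang_eps I \<and> x = cons k ps \<and>
                 (\<forall>p\<in>set ps. length p < length x \<and> derives I p x)" if "x \<in> lang_eps I" for x
  proof -
    from parse[of x] that inv obtain k ps where k: "k \<in> K" "length ps = ar k" "x = cons k ps"
      "\<forall>p\<in>set ps. p \<in> P \<and> length p < length x" by blast
    have psL: "\<forall>p\<in>set ps. p \<in> lang_eps I" using k(4) PL by blast
    have "derives I p x" if "p \<in> set ps" for p
    proof -
      from that obtain i where i: "i < length ps" "p = ps ! i" by (metis in_set_conv_nth)
      from splt[OF k(1) k(2) i(1)] obtain pre suf where
        ps: "cons k ps = pre @ ps ! i @ suf" "pre @ suf = cons k (ps[i := []])" by blast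
      have "set (ps[i := []]) \<subseteq> insert [] (set ps)" by (rule set_update_subset_insert)
      then have "\<forall>q\<in>set (ps[i := []]). q \<in> lang_eps I" using psL by auto
      then have "pre @ suf \<in> lang_eps I" using ps(2) closed[OF k(1)] k(2) by simp
      then have "derives I (ps ! i) (pre @ ps ! i @ suf)"
        unfolding lang_eps_def by (auto intro: derives_insert)
      then show ?thesis using ps(1) k(3) i(2) by simp
    qed
    then show ?thesis using k psL by blast
  qed
  have "afull (derives I) (lang_eps I)"
    by (rule gen_wqo[where sz = length and cons = cons and ar = ar and K = K])
       (auto intro: derives_trans finK mono dest: dec)
  then show ?thesis unfolding wqo_on_def afull_def by (auto intro: derives_trans)
qed

lemma lang_eps_inv:
  assumes "Inv []" "\<And>u. u \<in> I \<Longrightarrow> Inv u"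
    and "\<And>v u w. Inv v \<Longrightarrow> Inv u \<Longrightarrow> w \<in> shuffles v u \<Longrightarrow> Inv w"
  shows "lang_eps I \<subseteq> {w. Inv w}"
proof
  fix w assume "w \<in> lang_eps I"
  then have "(step I)\<^sup>*\<^sup>* [] w" unfolding lang_eps_def derives_def by simp
  then show "w \<in> {w. Inv w}"
  proof (induction rule: rtranclp_induct)
    case base then show ?case using assms(1) by simp
  next
    case (step y z)
    then obtain u where "u \<in> I" "z \<in> shuffles y u" unfolding step_iff by blast
    then show ?case using step.IH assms(2,3) by blast
  qed
qed

definition cnt :: "letter \<Rightarrow> word \<Rightarrow> nat" where
  "cnt c w = length (filter ((=) c) w)"

lemma cnt_simps[simp]:
  "cnt c [] = 0" "cnt c (x # w) = (if x = c then Suc (cnt c w) else cnt c w)"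
  "cnt c (u @ v) = cnt c u + cnt c v"
  by (auto simp: cnt_def)

lemma cnt_replicate[simp]: "cnt c (replicate m d) = (if c = d then m else 0)"
  by (induction m) auto

lemma cnt_shuffles: "w \<in> shuffles v u \<Longrightarrow> cnt c w = cnt c v + cnt c u"
proof -
  assume "w \<in> shuffles v u"
  then have "filter ((=) c) w \<in> shuffles (filter ((=) c) v) (filter ((=) c) u)"
    using filter_shuffles[of "(=) c" v u] by blast
  then show ?thesis unfolding cnt_def by (rule length_shuffles)
qed

lemma take_shuffles: "w \<in> shuffles v u \<Longrightarrow> \<exists>k1 k2. take k w \<in> shuffles (take k1 v) (take k2 u)"
proof (induction w arbitrary: v u k)
  case Nil
  then show ?case by (intro exI[of _ 0]) simp
next
  case (Cons c w)
  show ?case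
  proof (cases k)
    case 0
    then show ?thesis by (intro exI[of _ 0]) simp
  next
    case (Suc k')
    from Cons.prems[unfolded Cons_in_shuffles_iff] show ?thesis
    proof (elim disjE)
      assume h: "v \<noteq> [] \<and> hd v = c \<and> w \<in> shuffles (tl v) u"
      then obtain v' where v: "v = c # v'" by (cases v) auto
      with h have "w \<in> shuffles v' u" by simp
      from Cons.IH[OF this, of k'] obtain k1 k2 where "take k' w \<in> shuffles (take k1 v') (take k2 u)" by blast
      then have "take k (c # w) \<in> shuffles (take (Suc k1) v) (take k2 u)"
        using v Suc by (simp add: Cons_in_shuffles_leftI)
      then show ?thesis by blast
    next
      assume h: "u \<noteq> [] \<and> hd u = c \<and> w \<in> shuffles v (tl u)"
      then obtain u' where u: "u = c # u'" by (cases u) auto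
      with h have "w \<in> shuffles v u'" by simp
      from Cons.IH[OF this, of k'] obtain k1 k2 where "take k' w \<in> shuffles (take k1 v) (take k2 u')" by blast
      then have "take k (c # w) \<in> shuffles (take k1 v) (take (Suc k2) u)"
        using u Suc by (simp add: Cons_in_shuffles_rightI)
      then show ?thesis by blast
    qed
  qed
qed

definition hh :: "int \<Rightarrow> int \<Rightarrow> word \<Rightarrow> int" where
  "hh p q w = p * int (cnt a w) - q * int (cnt b w)"

lemma hh_simps[simp]:
  "hh p q [] = 0" "hh p q (u @ v) = hh p q u + hh p q v"
  "hh p q (a # w) = p + hh p q w" "hh p q (b # w) = hh p q w - q"
  by (auto simp: hh_def algebra_simps)

lemma hh_shuffles: "w \<in> shuffles v u \<Longrightarrow> hh p q w = hh p q v + hh p q u"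
  using cnt_shuffles[of w v u a] cnt_shuffles[of w v u b] by (simp add: hh_def algebra_simps)

definition Path :: "int \<Rightarrow> int \<Rightarrow> word \<Rightarrow> bool" where
  "Path p q w \<longleftrightarrow> (\<forall>k. 0 \<le> hh p q (take k w))"

lemma Path_shuffles: "Path p q v \<Longrightarrow> Path p q u \<Longrightarrow> w \<in> shuffles v u \<Longrightarrow> Path p q w"
  unfolding Path_def
proof
  fix k assume v: "\<forall>k. 0 \<le> hh p q (take k v)" and u: "\<forall>k. 0 \<le> hh p q (take k u)" and w: "w \<in> shuffles v u"
  from take_shuffles[OF w, of k] obtain k1 k2 where "take k w \<in> shuffles (take k1 v) (take k2 u)" by blast
  from hh_shuffles[OF this, of p q] v u show "0 \<le> hh p q (take k w)" by (metis add_nonneg_nonneg)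
qed

lemma Path_Nil[simp]: "Path p q []" unfolding Path_def by simp

lemma Path_whole: "Path p q w \<Longrightarrow> 0 \<le> hh p q w"
  unfolding Path_def by (metis take_all_iff order_refl)

lemma Path_take: "Path p q w \<Longrightarrow> Path p q (take j w)"
  unfolding Path_def by (simp add: min_def)

lemma Path_append1: "Path p q (u @ v) \<Longrightarrow> Path p q u"
  using Path_take[of p q "u @ v" "length u"] by simp

lemma take_hh_ge:
  "Path p q w \<Longrightarrow> 0 \<le> hh p q (take k w)" unfolding Path_def by blast




subsection \<open>Last crossing (letter a has weight 1)\<close>

lemma LC:
  fixes q :: int
  assumes P: "Path 1 q x" and h1: "1 \<le> hh 1 q x" and q: "0 \<le> q"
  shows "\<exists>y z. x = y @ a # z \<and> Path 1 q y \<and> hh 1 q y = hh 1 q x - 1 \<and> Path 1 q z \<and> hh 1 q z = 0"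
proof -
  define J where "J = {j. j \<le> length x \<and> hh 1 q (take j x) < hh 1 q x}"
  have fin: "finite J" unfolding J_def by auto
  have "0 \<in> J" unfolding J_def using h1 by simp
  define j0 where "j0 = Max J"
  have j0J: "j0 \<in> J" unfolding j0_def using fin \<open>0 \<in> J\<close> Max_in by blast
  have jmax: "j \<le> j0" if "j \<in> J" for j unfolding j0_def using fin that by simp
  have lt: "hh 1 q (take j0 x) < hh 1 q x" using j0J unfolding J_def by simp
  have j0l: "j0 < length x"
  proof (rule ccontr)
    assume "\<not> j0 < length x"
    then have "take j0 x = x" by simp
    with lt show False by simp
  qed
  have tk: "take (Suc j0) x = take j0 x @ [x ! j0]" using j0l by (rule take_Suc_conv_app_nth)
  have notJ: "hh 1 q x \<le> hh 1 q (take j x)" if "j0 < j" for j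
  proof (rule ccontr)
    assume c: "\<not> hh 1 q x \<le> hh 1 q (take j x)"
    have "j \<le> length x"
    proof (rule ccontr)
      assume "\<not> j \<le> length x"
      then have "take j x = x" by simp
      with c show False by simp
    qed
    with c have "j \<in> J" unfolding J_def by simp
    with jmax that show False by fastforce
  qed
  have HS0: "hh 1 q x \<le> hh 1 q (take (Suc j0) x)" using notJ[of "Suc j0"] by simp
  have xa: "x ! j0 = a"
  proof (rule ccontr)
    assume "x ! j0 \<noteq> a"
    then have "x ! j0 = b" by (cases "x ! j0") auto
    then have "hh 1 q (take (Suc j0) x) = hh 1 q (take j0 x) - q" by (simp add: tk)
    with lt q HS0 show False by linarith
  qed
  have HS1: "hh 1 q (take (Suc j0) x) = hh 1 q (take j0 x) + 1" using xa by (simp add: tk)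
  have Hj0: "hh 1 q (take j0 x) = hh 1 q x - 1" using HS0 HS1 lt by linarith
  have HS: "hh 1 q (take (Suc j0) x) = hh 1 q x" using HS1 Hj0 by linarith
  define y where "y = take j0 x"
  define z where "z = drop (Suc j0) x"
  have xyz: "x = y @ a # z" unfolding y_def z_def using id_take_nth_drop[OF j0l] xa by simp
  have Py: "Path 1 q y" unfolding y_def using P by (rule Path_take)
  have Pz: "Path 1 q z" unfolding Path_def
  proof
    fix k
    have e: "take (Suc j0 + k) x = take (Suc j0) x @ take k z"
      unfolding z_def by (rule take_add)
    have "hh 1 q (take (Suc j0 + k) x) = hh 1 q (take (Suc j0) x) + hh 1 q (take k z)"
      unfolding e by (rule hh_simps(2))
    moreover have "hh 1 q x \<le> hh 1 q (take (Suc j0 + k) x)" by (rule notJ) simp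
    ultimately show "0 \<le> hh 1 q (take k z)" using HS by linarith
  qed
  have "x = take (Suc j0) x @ z" unfolding z_def by simp
  then have "hh 1 q x = hh 1 q (take (Suc j0) x) + hh 1 q z" by (metis hh_simps(2))
  then have Hz: "hh 1 q z = 0" using HS by linarith
  have Hy: "hh 1 q y = hh 1 q x - 1" unfolding y_def by (rule Hj0)
  show ?thesis using xyz Py Pz Hz Hy by blast
qed

lemma DL:
  fixes q :: int
  assumes "0 \<le> q"
  shows "Path 1 q x \<Longrightarrow> int k \<le> hh 1 q x \<Longrightarrow> \<exists>y zs. length zs = k \<and> x = y @ concat (map ((#) a) zs) \<and>
     Path 1 q y \<and> hh 1 q y = hh 1 q x - int k \<and> (\<forall>z\<in>set zs. Path 1 q z \<and> hh 1 q z = 0)"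
proof (induction k)
  case 0
  then show ?case by (intro exI[of _ x] exI[of _ "[]"]) simp
next
  case (Suc k)
  have "int k \<le> hh 1 q x" using Suc.prems(2) by simp
  from Suc.IH[OF Suc.prems(1) this] obtain y zs where y: "length zs = k" "x = y @ concat (map ((#) a) zs)" "Path 1 q y"
    "hh 1 q y = hh 1 q x - int k" "\<forall>z\<in>set zs. Path 1 q z \<and> hh 1 q z = 0" by blast
  have "1 \<le> hh 1 q y" using y(4) Suc.prems(2) by simp
  from LC[OF y(3) this assms] obtain y' z where
    y': "y = y' @ a # z" "Path 1 q y'" "hh 1 q y' = hh 1 q y - 1" "Path 1 q z" "hh 1 q z = 0" by blast
  have e1: "x = y' @ concat (map ((#) a) (z # zs))" using y(2) y'(1) by simp
  have e2: "hh 1 q y' = hh 1 q x - int (Suc k)" using y(4) y'(3) by simp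
  have e3: "\<forall>z'\<in>set (z # zs). Path 1 q z' \<and> hh 1 q z' = 0" using y(5) y'(4,5) by simp
  have e4: "length (z # zs) = Suc k" using y(1) by simp
  show ?case using e1 e2 e3 e4 y'(2) by blast
qed




lemma concat_map_split:
  assumes "i < length zs"
  shows "concat (map f zs) = concat (map f (take i zs)) @ f (zs ! i) @ concat (map f (drop (Suc i) zs))"
proof -
  have e: "zs = take i zs @ zs ! i # drop (Suc i) zs" using assms by (rule id_take_nth_drop)
  have "concat (map f zs) = concat (map f (take i zs @ zs ! i # drop (Suc i) zs))"
    by (subst (1) e) (rule refl)
  then show ?thesis by simp
qed

lemma concat_map_upd:
  assumes "i < length zs"
  shows "concat (map f (zs[i := v])) = concat (map f (take i zs)) @ f v @ concat (map f (drop (Suc i) zs))"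
  using assms by (simp add: upd_conv_take_nth_drop)

lemma concat_map_Cons_replicate: "concat (map ((#) c) (replicate m [])) = replicate m c"
  by (induction m) auto

lemma length_concat_map_Cons: "z \<in> set zs \<Longrightarrow> length z < length (concat (map ((#) c) zs))"
  by (induction zs) auto

lemma cnt_concat_map_Cons:
  "cnt e (concat (map ((#) d) zs)) = (if e = d then length zs else 0) + sum_list (map (cnt e) zs)"
  by (induction zs) auto

lemma dvd_sum_list_cnt: "(\<forall>z\<in>set zs. n dvd cnt e z) \<Longrightarrow> n dvd sum_list (map (cnt e) zs)"
  by (induction zs) auto

lemma list_all2_hd_tl:
  assumes "list_all2 (derives I) ps qs"
  shows "derives I (hd ps) (hd qs) \<and> list_all2 (derives I) (tl ps) (tl qs)"
  using assms by (cases ps; cases qs) auto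

lemma hh_replicate_a[simp]: "hh p q (replicate m a) = p * int m"
  by (simp add: hh_def)

lemma Path_rep_b: "Path 1 (int n) (replicate n a @ [b])"
  unfolding Path_def
proof
  fix k
  show "0 \<le> hh 1 (int n) (take k (replicate n a @ [b]))"
  proof (cases "k \<le> n")
    case True
    then show ?thesis by (simp add: take_append)
  next
    case False
    then have "take k (replicate n a @ [b]) = replicate n a @ [b]" by simp
    then show ?thesis by simp
  qed
qed

lemma Path_rep: "Path 1 (int n) (replicate n a)"
  unfolding Path_def by (simp add: min_def)

lemma Path_a: "Path 1 q [a]"
  unfolding Path_def
proof
  fix k show "0 \<le> hh 1 q (take k [a])" by (cases k) auto
qed

subsection \<open>Case A: I = {a^n b, a}\<close>

definition consA :: "nat \<Rightarrow> word list \<Rightarrow> word" where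
  "consA k ps = (if k = 0 then [] else if k = 1 then hd ps @ [a]
                 else hd ps @ concat (map ((#) a) (tl ps)) @ [b])"

definition arA :: "nat \<Rightarrow> nat \<Rightarrow> nat" where
  "arA n k = (if k = 0 then 0 else if k = 1 then 1 else Suc n)"

lemma caseA: "wqo_on (derives {replicate n a @ [b], [a]}) (lang_eps {replicate n a @ [b], [a]})"
proof (rule framework[where P = "{w. Path 1 (int n) w}" and cons = consA and ar = "arA n" and K = "{0,1,2}"])
  let ?I = "{replicate n a @ [b], [a]}"
  show "finite {0::nat, 1, 2}" by simp
  show "lang_eps ?I \<subseteq> {w. Path 1 (int n) w}"
    by (rule lang_eps_inv) (auto intro: Path_shuffles Path_rep_b Path_a)
next
  fix w assume "w \<in> {w. Path 1 (int n) w}"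
  then have Pw: "Path 1 (int n) w" by simp
  show "\<exists>k\<in>{0,1,2}. \<exists>ps. length ps = arA n k \<and> w = consA k ps \<and>
          (\<forall>p\<in>set ps. p \<in> {w. Path 1 (int n) w} \<and> length p < length w)"
  proof (cases w rule: rev_cases)
    case Nil
    then show ?thesis by (intro bexI[of _ 0] exI[of _ "[]"]) (auto simp: consA_def arA_def)
  next
    case (snoc x c)
    have Px: "Path 1 (int n) x" using Pw snoc Path_append1 by blast
    show ?thesis
    proof (cases c)
      case a
      then show ?thesis using snoc Px
        by (intro bexI[of _ 1] exI[of _ "[x]"]) (auto simp: consA_def arA_def)
    next
      case b
      have "0 \<le> hh 1 (int n) w" using Pw by (rule Path_whole)
      then have "int n \<le> hh 1 (int n) x" using snoc b by simp
      from DL[OF _ Px this] obtain y zs where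
        d: "length zs = n" "x = y @ concat (map ((#) a) zs)" "Path 1 (int n) y"
           "\<forall>z\<in>set zs. Path 1 (int n) z \<and> hh 1 (int n) z = 0" by auto
      have "w = consA 2 (y # zs)" using snoc b d(2) by (simp add: consA_def)
      moreover have "length (y # zs) = arA n 2" using d(1) by (simp add: arA_def)
      moreover have "\<forall>p\<in>set (y # zs). p \<in> {w. Path 1 (int n) w} \<and> length p < length w"
        using d snoc length_concat_map_Cons[of _ zs a] by fastforce
      ultimately show ?thesis by blast
    qed
  qed
next
  fix k :: nat assume "k \<in> {0,1,2}"
  then show "derives {replicate n a @ [b], [a]} [] (consA k (replicate (arA n k) []))"
    by (auto simp: consA_def arA_def concat_map_Cons_replicate intro: derives_from_I)
next
  fix k and ps qs :: "word list" assume h: "list_all2 (derives {replicate n a @ [b], [a]}) ps qs"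
  note ht = list_all2_hd_tl[OF h]
  show "derives {replicate n a @ [b], [a]} (consA k ps) (consA k qs)"
    unfolding consA_def
    using ht derives_concat_map[of "{replicate n a @ [b], [a]}" "(#) a", OF derives_Cons]
    by (auto intro!: derives_app)
next
  fix k and ps :: "word list" and i assume k: "k \<in> {0,1,2}" and l: "length ps = arA n k" and i: "i < length ps"
  show "\<exists>pre suf. consA k ps = pre @ ps ! i @ suf \<and> pre @ suf = consA k (ps[i := []])"
  proof (cases "k = 1")
    case True
    then obtain p where "ps = [p]" using l by (auto simp: arA_def length_Suc_conv)
    then show ?thesis using i True by (intro exI[of _ "[]"] exI[of _ "[a]"]) (simp add: consA_def)
  next
    case k1: False
    then have k2: "k = 2" using k l i by (auto simp: arA_def)
    then obtain y zs where ps: "ps = y # zs" using l by (cases ps) (auto simp: arA_def)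
    show ?thesis
    proof (cases i)
      case 0
      then show ?thesis using ps k2
        by (intro exI[of _ "[]"] exI[of _ "concat (map ((#) a) zs) @ [b]"]) (simp add: consA_def)
    next
      case (Suc i')
      then have i': "i' < length zs" using i ps by simp
      show ?thesis
        using ps k2 Suc concat_map_split[OF i', of "(#) a"] concat_map_upd[OF i', of "(#) a" "[]"]
        by (intro exI[of _ "y @ concat (map ((#) a) (take i' zs)) @ [a]"]
                  exI[of _ "concat (map ((#) a) (drop (Suc i') zs)) @ [b]"]) (simp add: consA_def)
    qed
  qed
qed

subsection \<open>Case C: I = {a^n b, a^n}\<close>

definition consC :: "nat \<Rightarrow> word list \<Rightarrow> word" where
  "consC k ps = (if k = 0 then [] else if k = 1 then hd ps @ concat (map ((#) a) (tl ps))
                 else hd ps @ concat (map ((#) a) (tl ps)) @ [b])"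

definition arC :: "nat \<Rightarrow> nat \<Rightarrow> nat" where
  "arC n k = (if k = 0 then 0 else Suc n)"

lemma hh_zero_dvd:
  assumes "hh 1 (int n) z = 0" shows "n dvd cnt a z"
proof -
  have "int (cnt a z) = int n * int (cnt b z)" using assms by (simp add: hh_def)
  then have "cnt a z = n * cnt b z" by (metis of_nat_eq_iff of_nat_mult)
  then show ?thesis by simp
qed

lemma dvd_y:
  assumes "n dvd cnt a (y @ concat (map ((#) a) zs) @ t)" "length zs = n"
    "\<forall>z\<in>set zs. n dvd cnt a z" "cnt a t = 0"
  shows "n dvd cnt a y"
proof -
  have "cnt a (y @ concat (map ((#) a) zs) @ t) = cnt a y + (n + sum_list (map (cnt a) zs))"
    using assms(2,4) by (simp add: cnt_concat_map_Cons)
  moreover have "n dvd n + sum_list (map (cnt a) zs)" using dvd_sum_list_cnt[OF assms(3)] by simp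
  ultimately show ?thesis using assms(1) by (metis dvd_add_left_iff)
qed

lemma caseC: "wqo_on (derives {replicate n a @ [b], replicate n a}) (lang_eps {replicate n a @ [b], replicate n a})"
proof (rule framework[where P = "{w. Path 1 (int n) w \<and> n dvd cnt a w}" and cons = consC and ar = "arC n" and K = "{0,1,2}"])
  let ?I = "{replicate n a @ [b], replicate n a}"
  show "finite {0::nat, 1, 2}" by simp
  show "lang_eps ?I \<subseteq> {w. Path 1 (int n) w \<and> n dvd cnt a w}"
    by (rule lang_eps_inv) (auto intro: Path_shuffles Path_rep_b Path_rep simp: cnt_shuffles)
next
  fix w assume "w \<in> {w. Path 1 (int n) w \<and> n dvd cnt a w}"
  then have Pw: "Path 1 (int n) w" and Dw: "n dvd cnt a w" by auto
  show "\<exists>k\<in>{0,1,2}. \<exists>ps. length ps = arC n k \<and> w = consC k ps \<and>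
          (\<forall>p\<in>set ps. p \<in> {w. Path 1 (int n) w \<and> n dvd cnt a w} \<and> length p < length w)"
  proof (cases w rule: rev_cases)
    case Nil
    then show ?thesis by (intro bexI[of _ 0] exI[of _ "[]"]) (auto simp: consC_def arC_def)
  next
    case (snoc x c)
    have Px: "Path 1 (int n) x" using Pw snoc Path_append1 by blast
    show ?thesis
    proof (cases c)
      case a
      have n0: "n \<noteq> 0"
      proof
        assume "n = 0"
        then have "cnt a w = 0" using Dw by simp
        then show False using snoc a by simp
      qed
      have "0 \<le> hh 1 (int n) x" using Px by (rule Path_whole)
      then have h1: "1 \<le> hh 1 (int n) w" using snoc a by simp
      have "int n dvd hh 1 (int n) w"
        using Dw unfolding hh_def by (simp add: int_dvd_int_iff[symmetric] del: int_dvd_int_iff)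
      then obtain m where m: "hh 1 (int n) w = int n * m" by (elim dvdE)
      have "1 \<le> m" using h1 m n0
        by (metis mult_eq_0_iff int_one_le_iff_zero_less linorder_not_less mult_le_0_iff not_one_le_zero of_nat_0_less_iff zero_less_iff_neq_zero le_less)
      then have "int n \<le> hh 1 (int n) w" using m by (simp add: mult_le_cancel_left1)
      from DL[OF _ Pw this] obtain y zs where
        d: "length zs = n" "w = y @ concat (map ((#) a) zs)" "Path 1 (int n) y"
           "\<forall>z\<in>set zs. Path 1 (int n) z \<and> hh 1 (int n) z = 0" by auto
      have dz: "\<forall>z\<in>set zs. n dvd cnt a z" using d(4) hh_zero_dvd by blast
      have dy: "n dvd cnt a y" using dvd_y[of n y zs "[]"] Dw d(1,2) dz by simp
      have "w = consC 1 (y # zs)" using d(2) by (simp add: consC_def)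
      moreover have "length (y # zs) = arC n 1" using d(1) by (simp add: arC_def)
      moreover have "zs \<noteq> []" using d(1) n0 by auto
      then have "length y < length w" using d(2) by (cases zs) auto
      moreover have "\<forall>z\<in>set zs. length z < length w"
        using d(2) length_concat_map_Cons[of _ zs a] by fastforce
      ultimately show ?thesis using d dz dy by (intro bexI[of _ 1] exI[of _ "y # zs"]) auto
    next
      case b
      have "0 \<le> hh 1 (int n) w" using Pw by (rule Path_whole)
      then have "int n \<le> hh 1 (int n) x" using snoc b by simp
      from DL[OF _ Px this] obtain y zs where
        d: "length zs = n" "x = y @ concat (map ((#) a) zs)" "Path 1 (int n) y"
           "\<forall>z\<in>set zs. Path 1 (int n) z \<and> hh 1 (int n) z = 0" by auto
      have dz: "\<forall>z\<in>set zs. n dvd cnt a z" using d(4) hh_zero_dvd by blast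
      have dy: "n dvd cnt a y" using dvd_y[of n y zs "[b]"] Dw d(1,2) dz snoc b by simp
      have "w = consC 2 (y # zs)" using snoc b d(2) by (simp add: consC_def)
      moreover have "length (y # zs) = arC n 2" using d(1) by (simp add: arC_def)
      moreover have "\<forall>p\<in>set (y # zs). length p < length w"
        using d snoc length_concat_map_Cons[of _ zs a] by fastforce
      ultimately show ?thesis using d dz dy by (intro bexI[of _ 2] exI[of _ "y # zs"]) auto
    qed
  qed
next
  fix k :: nat assume "k \<in> {0,1,2}"
  then show "derives {replicate n a @ [b], replicate n a} [] (consC k (replicate (arC n k) []))"
    by (auto simp: consC_def arC_def concat_map_Cons_replicate intro: derives_from_I)
next
  fix k and ps qs :: "word list" assume h: "list_all2 (derives {replicate n a @ [b], replicate n a}) ps qs"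
  note ht = list_all2_hd_tl[OF h]
  show "derives {replicate n a @ [b], replicate n a} (consC k ps) (consC k qs)"
    unfolding consC_def
    using ht derives_concat_map[of "{replicate n a @ [b], replicate n a}" "(#) a", OF derives_Cons]
    by (auto intro!: derives_app)
next
  fix k and ps :: "word list" and i assume k: "k \<in> {0,1,2}" and l: "length ps = arC n k" and i: "i < length ps"
  have k0: "k \<noteq> 0" using l i by (cases "k = 0") (auto simp: arC_def)
  obtain y zs where ps: "ps = y # zs" using l k0 by (cases ps) (auto simp: arC_def)
  define t where "t = (if k = 1 then [] else [b])"
  have cps: "consC k qs = hd qs @ concat (map ((#) a) (tl qs)) @ t" for qs
    using k0 by (simp add: consC_def t_def)
  show "\<exists>pre suf. consC k ps = pre @ ps ! i @ suf \<and> pre @ suf = consC k (ps[i := []])"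
  proof (cases i)
    case 0
    then show ?thesis using ps unfolding cps
      by (intro exI[of _ "[]"] exI[of _ "concat (map ((#) a) zs) @ t"]) simp
  next
    case (Suc i')
    then have i': "i' < length zs" using i ps by simp
    show ?thesis
      using ps Suc concat_map_split[OF i', of "(#) a"] concat_map_upd[OF i', of "(#) a" "[]"] unfolding cps
      by (intro exI[of _ "y @ concat (map ((#) a) (take i' zs)) @ [a]"]
                exI[of _ "concat (map ((#) a) (drop (Suc i') zs)) @ t"]) simp
  qed
qed




subsection \<open>Case B: I = {a b^n, a}\<close>

abbreviation HB :: "nat \<Rightarrow> word \<Rightarrow> int" where
  "HB n w \<equiv> hh (int n) 1 w"

definition PB :: "nat \<Rightarrow> word \<Rightarrow> bool" where
  "PB n w \<longleftrightarrow> Path (int n) 1 w \<and> n dvd cnt b w"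

lemma HB_dvd_iff: "int n dvd HB n w \<longleftrightarrow> n dvd cnt b w"
proof -
  have "HB n w = int n * int (cnt a w) - int (cnt b w)" by (simp add: hh_def)
  also have "\<dots> = int n * int (cnt a w) + (- int (cnt b w))" by simp
  finally have e: "HB n w = int n * int (cnt a w) + (- int (cnt b w))" .
  have "int n dvd int n * int (cnt a w)" by simp
  then have "int n dvd HB n w \<longleftrightarrow> int n dvd (- int (cnt b w))"
    unfolding e by (rule dvd_add_right_iff)
  then have "int n dvd HB n w \<longleftrightarrow> int n dvd int (cnt b w)" by simp
  then show ?thesis by simp
qed

lemma take_le_cases: "\<exists>k'. k' \<le> length x \<and> take k x = take k' x"
  by (intro exI[of _ "min k (length x)"]) (simp add: min_def)

lemma NL:
  assumes n: "0 < n"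
  shows "j < n \<Longrightarrow> (\<forall>k. - int j \<le> HB n (take k x)) \<Longrightarrow> int n dvd (HB n x + int j) \<Longrightarrow>
    \<exists>z1 zs. length zs = j \<and> x = z1 @ concat (map ((#) b) zs) \<and> PB n z1 \<and> (\<forall>z\<in>set zs. PB n z)"
proof (induction j arbitrary: x)
  case 0
  then have "Path (int n) 1 x" unfolding Path_def by simp
  moreover have "n dvd cnt b x" using 0 HB_dvd_iff by simp
  ultimately show ?case by (intro exI[of _ x] exI[of _ "[]"]) (simp add: PB_def)
next
  case (Suc j)
  define H where "H t = HB n (take t x)" for t
  have glob: "- int (Suc j) \<le> H t" for t using Suc.prems(2) unfolding H_def by simp
  have H0: "H 0 = 0" unfolding H_def by simp
  have Hstep: "H (Suc t) = H t + (if x ! t = a then int n else -1)" if "t < length x" for t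
    unfolding H_def using take_Suc_conv_app_nth[OF that] by (cases "x ! t") auto
  have Hend: "H (length x) = HB n x" unfolding H_def by simp
  define Rec where "Rec t \<longleftrightarrow> t \<le> length x \<and> (\<forall>s. t \<le> s \<longrightarrow> s \<le> length x \<longrightarrow> H t \<le> H s)" for t
  define T where "T = {t. 1 \<le> t \<and> t \<le> length x \<and> x ! (t - 1) = b \<and> int n dvd (H t + int (Suc j)) \<and> Rec t}"
  define B where "B = {t. t \<le> length x \<and> (\<forall>t'. t \<le> t' \<longrightarrow> t' \<le> length x \<longrightarrow> Rec t')}"
  have "length x \<in> B" unfolding B_def Rec_def by auto
  then obtain ts where ts: "ts \<in> B" and tsmin: "\<And>t. t < ts \<Longrightarrow> t \<notin> B"
    using exists_least_iff[of "\<lambda>t. t \<in> B"] by blast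
  have allA: "x ! i = a" if "ts \<le> i" "i < length x" for i
  proof (rule ccontr)
    assume "x ! i \<noteq> a"
    then have "x ! i = b" by (cases "x ! i") auto
    then have "H (Suc i) = H i - 1" using Hstep[OF that(2)] by simp
    moreover have "Rec i" using ts that unfolding B_def by auto
    then have "H i \<le> H (Suc i)" using that unfolding Rec_def by simp
    ultimately show False by linarith
  qed
  have dropA: "HB n (drop ts x) = int n * int (length x - ts)"
  proof -
    have "\<forall>c\<in>set (drop ts x). c = a"
      using allA by (auto simp: in_set_conv_nth)
    then have f1: "filter ((=) a) (drop ts x) = drop ts x" by (simp add: filter_id_conv eq_commute)
    have f2: "filter ((=) b) (drop ts x) = []" using \<open>\<forall>c\<in>set (drop ts x). c = a\<close>
      by (auto simp: filter_empty_conv)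
    have "cnt a (drop ts x) = length (drop ts x)" "cnt b (drop ts x) = 0"
      unfolding cnt_def using f1 f2 by simp_all
    then show ?thesis by (simp add: hh_def)
  qed
  have tsle: "ts \<le> length x" using ts unfolding B_def by simp
  have Hx: "HB n x = H ts + int n * int (length x - ts)"
  proof -
    have "x = take ts x @ drop ts x" by simp
    have "HB n (take ts x @ drop ts x) = HB n (take ts x) + HB n (drop ts x)" by (rule hh_simps(2))
    then have "HB n x = HB n (take ts x) + HB n (drop ts x)" by simp
    then show ?thesis using dropA unfolding H_def by simp
  qed
  have ts0: "ts \<noteq> 0"
  proof
    assume "ts = 0"
    then have "HB n x = int n * int (length x)" using Hx H0 by simp
    have "int n dvd int n * int (length x)" by simp
    then have "int n dvd (int n * int (length x) + int (Suc j)) \<longleftrightarrow> int n dvd int (Suc j)"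
      by (rule dvd_add_right_iff)
    then have "int n dvd int (Suc j)" using Suc.prems(3) \<open>HB n x = int n * int (length x)\<close> by simp
    then have "n dvd Suc j" by (simp only: int_dvd_int_iff)
    then show False using Suc.prems(1) by (simp add: nat_dvd_not_less)
  qed
  have notB: "ts - 1 \<notin> B" using tsmin ts0 by simp
  have Rts: "Rec ts" using ts unfolding B_def by simp
  have notR: "\<not> Rec (ts - 1)"
  proof
    assume "Rec (ts - 1)"
    have "Rec t'" if "ts - 1 \<le> t'" "t' \<le> length x" for t'
    proof (cases "t' = ts - 1")
      case True
      then show ?thesis using \<open>Rec (ts - 1)\<close> by simp
    next
      case False
      then have "ts \<le> t'" using that by linarith
      then show ?thesis using ts that unfolding B_def by blast
    qed
    then have "ts - 1 \<in> B" using tsle unfolding B_def by auto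
    with notB show False by simp
  qed
  have tsl: "ts - 1 < length x" using ts0 tsle by simp
  have xb: "x ! (ts - 1) = b"
  proof (rule ccontr)
    assume "x ! (ts - 1) \<noteq> b"
    then have "x ! (ts - 1) = a" by (cases "x ! (ts - 1)") auto
    then have "H ts = H (ts - 1) + int n" using Hstep[OF tsl] ts0 by simp
    have "H (ts - 1) \<le> H s" if "ts - 1 \<le> s" "s \<le> length x" for s
    proof (cases "s = ts - 1")
      case True then show ?thesis by simp
    next
      case False
      then have "ts \<le> s" using that by linarith
      then have "H ts \<le> H s" using Rts that unfolding Rec_def by blast
      then show ?thesis using \<open>H ts = H (ts - 1) + int n\<close> by linarith
    qed
    then have "Rec (ts - 1)" using tsl unfolding Rec_def by simp
    with notR show False by simp
  qed
  have tsT: "ts \<in> T"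
  proof -
    have "int n dvd (H ts + int (Suc j))"
    proof -
      have eq: "H ts + int (Suc j) = (HB n x + int (Suc j)) - int n * int (length x - ts)" using Hx by simp
      have "int n dvd (HB n x + int (Suc j)) - int n * int (length x - ts)"
        using Suc.prems(3) by (intro dvd_diff) simp_all
      then show ?thesis unfolding eq .
    qed
    then show ?thesis unfolding T_def using ts0 tsle xb Rts by simp
  qed
  then obtain q1 where q1T: "q1 \<in> T" and q1min: "\<And>t. t < q1 \<Longrightarrow> t \<notin> T"
    using exists_least_iff[of "\<lambda>t. t \<in> T"] by blast
  have q1: "1 \<le> q1" "q1 \<le> length x" "x ! (q1 - 1) = b" "int n dvd (H q1 + int (Suc j))" "Rec q1"
    using q1T unfolding T_def by auto
  define y where "y = take (q1 - 1) x"
  define z where "z = drop q1 x"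
  have q1l: "q1 - 1 < length x" using q1 by simp
  have xyz: "x = y @ b # z"
    unfolding y_def z_def using id_take_nth_drop[OF q1l] q1(1,3) by simp
  have tq1: "take q1 x = y @ [b]"
    unfolding y_def using take_Suc_conv_app_nth[OF q1l] q1(1,3) by simp
  have Hq1: "H q1 = HB n y - 1" unfolding H_def using tq1 by simp
  have ylow: "- int j \<le> HB n (take k y)" for k
  proof (rule ccontr)
    assume c: "\<not> - int j \<le> HB n (take k y)"
    obtain k' where k': "k' \<le> length y" "take k y = take k' y" using take_le_cases by blast
    have ly: "length y = q1 - 1" unfolding y_def using q1l by simp
    have "take k' y = take k' x" unfolding y_def using k' ly by (simp add: min_def)
    then have "H k' < - int j" using c k' unfolding H_def by simp
    then have ex: "\<exists>t. t \<le> q1 - 1 \<and> H t < - int j" using k' ly by auto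
    then obtain k0 where k0: "k0 \<le> q1 - 1 \<and> H k0 < - int j" and k0min: "\<And>t. t < k0 \<Longrightarrow> \<not> (t \<le> q1 - 1 \<and> H t < - int j)"
      using exists_least_iff[of "\<lambda>t. t \<le> q1 - 1 \<and> H t < - int j"] by blast
    have k00: "k0 \<noteq> 0"
    proof
      assume "k0 = 0"
      then have "H k0 = 0" using H0 by simp
      then show False using k0 by simp
    qed
    have k0l: "k0 - 1 < length x" using k0 q1 k00 by linarith
    have "k0 - 1 \<le> q1 - 1" using k0 by linarith
    moreover have "k0 - 1 < k0" using k00 by simp
    ultimately have prev: "- int j \<le> H (k0 - 1)" using k0min[of "k0 - 1"] by linarith
    have Hk0: "H k0 = - int (Suc j)" using k0 glob[of k0] by simp
    have xk: "x ! (k0 - 1) = b"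
    proof (rule ccontr)
      assume "x ! (k0 - 1) \<noteq> b"
      then have "x ! (k0 - 1) = a" by (cases "x ! (k0 - 1)") auto
      then have "H k0 = H (k0 - 1) + int n" using Hstep[OF k0l] k00 by simp
      then show False using prev Hk0 by simp
    qed
    have "Rec k0" unfolding Rec_def using glob Hk0 k0 q1 by auto
    then have "k0 \<in> T" unfolding T_def using k00 k0 q1 xk Hk0 by auto
    moreover have "k0 < q1" using k0 q1 by linarith
    ultimately show False using q1min by blast
  qed
  have ydvd: "int n dvd (HB n y + int j)"
  proof -
    have eq: "HB n y + int j = H q1 + int (Suc j)" using Hq1 by simp
    show ?thesis unfolding eq by (rule q1(4))
  qed
  have jn: "j < n" using Suc.prems(1) by simp
  have ylow': "\<forall>k. - int j \<le> HB n (take k y)" using ylow by blast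
  from Suc.IH[OF jn ylow' ydvd] obtain z1 zs where
    ih: "length zs = j" "y = z1 @ concat (map ((#) b) zs)" "PB n z1" "\<forall>z\<in>set zs. PB n z" by blast
  have zP: "Path (int n) 1 z" unfolding Path_def
  proof
    fix k
    obtain k' where k': "k' \<le> length z" "take k z = take k' z" using take_le_cases by blast
    have e: "take (q1 + k') x = take q1 x @ take k' z" unfolding z_def by (rule take_add)
    have "q1 + k' \<le> length x" using k' q1 unfolding z_def by simp
    then have "H q1 \<le> H (q1 + k')" using q1(5) unfolding Rec_def by simp
    moreover have "H (q1 + k') = H q1 + HB n (take k' z)" unfolding H_def e by simp
    ultimately show "0 \<le> HB n (take k z)" using k' by simp
  qed
  have zd: "n dvd cnt b z"
  proof -
    have "x = take q1 x @ z" unfolding z_def by simp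
    have "HB n (take q1 x @ z) = HB n (take q1 x) + HB n z" by (rule hh_simps(2))
    then have "HB n x = H q1 + HB n z" unfolding H_def z_def by simp
    then have eq: "HB n z = (HB n x + int (Suc j)) - (H q1 + int (Suc j))" by simp
    have "int n dvd (HB n x + int (Suc j)) - (H q1 + int (Suc j))"
      using Suc.prems(3) q1(4) by (rule dvd_diff)
    then have "int n dvd HB n z" unfolding eq .
    then show ?thesis using HB_dvd_iff by blast
  qed
  have "x = z1 @ concat (map ((#) b) (zs @ [z]))" using xyz ih(2) by simp
  moreover have "length (zs @ [z]) = Suc j" using ih(1) by simp
  moreover have "\<forall>z'\<in>set (zs @ [z]). PB n z'" using ih(4) zP zd unfolding PB_def by auto
  ultimately show ?case using ih(3) by blast
qed

definition consB :: "nat \<Rightarrow> word list \<Rightarrow> word" where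
  "consB k ps = (if k = 0 then [] else if k = 1 then hd ps @ [a]
                 else hd ps @ a # concat (map (\<lambda>z. z @ [b]) (tl ps)))"

lemma concat_map_snoc_replicate: "concat (map (\<lambda>z. z @ [c]) (replicate m [])) = replicate m c"
  by (induction m) auto

lemma conv_snoc: "z1 @ concat (map ((#) b) zs) @ [b] = concat (map (\<lambda>z. z @ [b]) (z1 # zs))"
  by (induction zs arbitrary: z1) auto

lemma length_concat_map_snoc: "z \<in> set zs \<Longrightarrow> length z < length (concat (map (\<lambda>z. z @ [c]) zs))"
  by (induction zs) auto

lemma Path_ab: "Path (int n) 1 ([a] @ replicate n b)"
  unfolding Path_def
proof
  fix k
  show "0 \<le> HB n (take k ([a] @ replicate n b))"
  proof (cases k)
    case 0 then show ?thesis by simp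
  next
    case (Suc k')
    then have "take k ([a] @ replicate n b) = a # replicate (min k' n) b" by simp
    moreover have "HB n (a # replicate (min k' n) b) = int n - int (min k' n)" by (simp add: hh_def)
    ultimately show ?thesis by simp
  qed
qed

lemma Path_ab': "Path (int n) 1 (a # replicate n b)" using Path_ab by simp

lemma Path_a_n: "Path (int n) 1 [a]"
  unfolding Path_def
proof
  fix k show "0 \<le> HB n (take k [a])" by (cases k) auto
qed

lemma caseB: "wqo_on (derives {[a] @ replicate n b, [a]}) (lang_eps {[a] @ replicate n b, [a]})"
proof (rule framework[where P = "{w. PB n w}" and cons = consB and ar = "arA n" and K = "{0,1,2}"])
  let ?I = "{[a] @ replicate n b, [a]}"
  show "finite {0::nat, 1, 2}" by simp
  show "lang_eps ?I \<subseteq> {w. PB n w}"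
    unfolding PB_def
    by (rule lang_eps_inv) (auto intro: Path_shuffles Path_ab' Path_a_n simp: cnt_shuffles)
next
  fix w assume "w \<in> {w. PB n w}"
  then have Pw: "Path (int n) 1 w" and Dw: "n dvd cnt b w" unfolding PB_def by auto
  show "\<exists>k\<in>{0,1,2}. \<exists>ps. length ps = arA n k \<and> w = consB k ps \<and>
          (\<forall>p\<in>set ps. p \<in> {w. PB n w} \<and> length p < length w)"
  proof (cases w rule: rev_cases)
    case Nil
    then show ?thesis by (intro bexI[of _ 0] exI[of _ "[]"]) (auto simp: consB_def arA_def)
  next
    case (snoc x c)
    have Px: "Path (int n) 1 x" using Pw snoc Path_append1 by blast
    show ?thesis
    proof (cases c)
      case a
      then have "PB n x" using Px Dw snoc unfolding PB_def by simp
      then show ?thesis using snoc a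
        by (intro bexI[of _ 1] exI[of _ "[x]"]) (auto simp: consB_def arA_def)
    next
      case b
      have n0: "0 < n"
      proof (rule ccontr)
        assume "\<not> 0 < n"
        then have "cnt b w = 0" using Dw by simp
        then show False using snoc b by simp
      qed
      define H where "H t = HB n (take t w)" for t
      have Hge: "0 \<le> H t" for t unfolding H_def using Pw by (rule take_hh_ge)
      define R where "R = {t. t < length w \<and> int n dvd H t \<and> (\<forall>s. t \<le> s \<longrightarrow> s \<le> length w \<longrightarrow> H t \<le> H s)}"
      have "0 \<in> R" unfolding R_def using snoc Hge by (simp add: H_def)
      have finR: "finite R" unfolding R_def by auto
      define t0 where "t0 = Max R"
      have t0R: "t0 \<in> R" unfolding t0_def using finR \<open>0 \<in> R\<close> Max_in by blast
      have tmax: "t \<le> t0" if "t \<in> R" for t unfolding t0_def using finR that by simp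
      have t0: "t0 < length w" "int n dvd H t0" "\<And>s. t0 \<le> s \<Longrightarrow> s \<le> length w \<Longrightarrow> H t0 \<le> H s"
        using t0R unfolding R_def by auto
      have strict: "H t0 < H s" if "t0 < s" "s < length w" for s
      proof (rule ccontr)
        assume "\<not> H t0 < H s"
        then have eq: "H s = H t0" using t0(3)[of s] that by simp
        have "s \<in> R" unfolding R_def using that eq t0(2,3) by auto
        then show False using tmax that by fastforce
      qed
      have Hstep: "H (Suc t) = H t + (if w ! t = a then int n else -1)" if "t < length w" for t
        unfolding H_def using take_Suc_conv_app_nth[OF that] by (cases "w ! t") auto
      have wa: "w ! t0 = a"
      proof (rule ccontr)
        assume "w ! t0 \<noteq> a"
        then have "H (Suc t0) = H t0 - 1" using Hstep[OF t0(1)] by simp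
        moreover have "H t0 \<le> H (Suc t0)" using t0(1) by (intro t0(3)) simp_all
        ultimately show False by simp
      qed
      have lw: "length w = Suc (length x)" using snoc by simp
      have t0x: "t0 < length x"
      proof (rule ccontr)
        assume "\<not> t0 < length x"
        then have "t0 = length x" using t0(1) lw by simp
        then have "w ! t0 = b" using snoc b by simp
        then show False using wa by simp
      qed
      have xa: "x ! t0 = a" using wa t0x snoc by (simp add: nth_append)
      define y where "y = take t0 x"
      define x' where "x' = drop (Suc t0) x"
      have xyx: "x = y @ a # x'" unfolding y_def x'_def using id_take_nth_drop[OF t0x] xa by simp
      have tw: "take t0 w = y" unfolding y_def using snoc t0x by simp
      have Hy: "H t0 = HB n y" unfolding H_def tw ..
      have low: "- int (n - 1) \<le> HB n (take k x')" for k
      proof -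
        obtain k' where k': "k' \<le> length x'" "take k x' = take k' x'" using take_le_cases by blast
        have "take (Suc t0 + k') w = y @ a # take k' x'"
        proof -
          have "Suc t0 + k' \<le> length x" using k' t0x unfolding x'_def by simp
          then have "take (Suc t0 + k') w = take (Suc t0 + k') x" using snoc by simp
          also have "\<dots> = take (Suc t0) x @ take k' x'" unfolding x'_def by (rule take_add)
          also have "take (Suc t0) x = y @ [a]" unfolding y_def using take_Suc_conv_app_nth[OF t0x] xa by simp
          finally show ?thesis by simp
        qed
        then have "H (Suc t0 + k') = HB n y + int n + HB n (take k' x')" unfolding H_def by simp
        moreover have "H t0 < H (Suc t0 + k')"
          using strict[of "Suc t0 + k'"] k' t0x lw unfolding x'_def by simp
        ultimately show ?thesis using Hy k' n0 by simp
      qed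
      have dvdx': "int n dvd (HB n x' + int (n - 1))"
      proof -
        have "HB n w = HB n y + int n + HB n x' - 1" using snoc b xyx by simp
        then have eq: "HB n x' + int (n - 1) = HB n w - HB n y"
          using n0 by (simp add: of_nat_diff)
        have "int n dvd HB n w" using Dw HB_dvd_iff by blast
        moreover have "int n dvd HB n y" using t0(2) Hy by simp
        ultimately show ?thesis unfolding eq by (rule dvd_diff)
      qed
      have "n - 1 < n" using n0 by simp
      from NL[OF n0 this _ dvdx'] low obtain z1 zs where
        nl: "length zs = n - 1" "x' = z1 @ concat (map ((#) b) zs)" "PB n z1" "\<forall>z\<in>set zs. PB n z"
        by blast
      have Py: "PB n y"
      proof -
        have "Path (int n) 1 y" unfolding y_def using Px by (rule Path_take)
        moreover have "n dvd cnt b y" using t0(2) Hy HB_dvd_iff by simp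
        ultimately show ?thesis unfolding PB_def by simp
      qed
      have weq: "w = consB 2 (y # z1 # zs)"
        using snoc b xyx nl(2) conv_snoc[of z1 zs] by (simp add: consB_def)
      have lens: "\<forall>p\<in>set (y # z1 # zs). length p < length w"
      proof
        fix p assume "p \<in> set (y # z1 # zs)"
        moreover have "length (concat (map (\<lambda>z. z @ [b]) (z1 # zs))) < length w"
          using weq by (simp add: consB_def)
        moreover have "length y < length w" using weq by (simp add: consB_def)
        ultimately show "length p < length w"
          using length_concat_map_snoc[of p "z1 # zs" b] by auto
      qed
      have "length (y # z1 # zs) = arA n 2" using nl(1) n0 by (simp add: arA_def)
      then show ?thesis using weq lens Py nl(3,4) by (intro bexI[of _ 2] exI[of _ "y # z1 # zs"]) auto
    qed
  qed
next
  fix k :: nat assume "k \<in> {0,1,2}"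
  then show "derives {[a] @ replicate n b, [a]} [] (consB k (replicate (arA n k) []))"
    by (auto simp: consB_def arA_def concat_map_snoc_replicate intro: derives_from_I)
next
  fix k and ps qs :: "word list" assume h: "list_all2 (derives {[a] @ replicate n b, [a]}) ps qs"
  note ht = list_all2_hd_tl[OF h]
  have sn: "derives {[a] @ replicate n b, [a]} (x @ [b]) (y @ [b])" if "derives {[a] @ replicate n b, [a]} x y" for x y
    using derives_app[OF that derives_refl] by simp
  show "derives {[a] @ replicate n b, [a]} (consB k ps) (consB k qs)"
    unfolding consB_def
    using ht derives_concat_map[of "{[a] @ replicate n b, [a]}" "\<lambda>z. z @ [b]", OF sn]
    by (auto intro!: derives_app derives_Cons)
next
  fix k and ps :: "word list" and i assume k: "k \<in> {0,1,2}" and l: "length ps = arA n k" and i: "i < length ps"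
  show "\<exists>pre suf. consB k ps = pre @ ps ! i @ suf \<and> pre @ suf = consB k (ps[i := []])"
  proof (cases "k = 1")
    case True
    then obtain p where "ps = [p]" using l by (auto simp: arA_def length_Suc_conv)
    then show ?thesis using i True by (intro exI[of _ "[]"] exI[of _ "[a]"]) (simp add: consB_def)
  next
    case k1: False
    then have k2: "k = 2" using k l i by (auto simp: arA_def)
    then obtain y zs where ps: "ps = y # zs" using l by (cases ps) (auto simp: arA_def)
    show ?thesis
    proof (cases i)
      case 0
      then show ?thesis using ps k2
        by (intro exI[of _ "[]"] exI[of _ "a # concat (map (\<lambda>z. z @ [b]) zs)"]) (simp add: consB_def)
    next
      case (Suc i')
      then have i': "i' < length zs" using i ps by simp
      show ?thesis
        using ps k2 Suc concat_map_split[OF i', of "\<lambda>z. z @ [b]"] concat_map_upd[OF i', of "\<lambda>z. z @ [b]" "[]"]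
        by (intro exI[of _ "y @ a # concat (map (\<lambda>z. z @ [b]) (take i' zs))"]
                  exI[of _ "[b] @ concat (map (\<lambda>z. z @ [b]) (drop (Suc i') zs))"]) (simp add: consB_def)
    qed
  qed
qed




subsection \<open>Symmetries\<close>

fun sw :: "letter \<Rightarrow> letter" where
  "sw a = b" | "sw b = a"

lemma sw_sw[simp]: "sw (sw c) = c" by (cases c) auto

lemma map_sw_sw[simp]: "map sw (map sw w) = w" by (induction w) auto

lemma sw_comp[simp]: "sw \<circ> sw = id" by (rule ext) simp

lemma rev_shuffles_mem: "w \<in> shuffles v u \<Longrightarrow> rev w \<in> shuffles (rev v) (rev u)"
proof (induction w arbitrary: v u)
  case Nil then show ?case by simp
next
  case (Cons c w)
  from Cons.prems[unfolded Cons_in_shuffles_iff] show ?case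
  proof (elim disjE)
    assume h: "v \<noteq> [] \<and> hd v = c \<and> w \<in> shuffles (tl v) u"
    then obtain v' where v: "v = c # v'" by (cases v) auto
    with h have "w \<in> shuffles v' u" by simp
    from Cons.IH[OF this] have "rev w \<in> shuffles (rev v') (rev u)" .
    from shuffles_append_mem[OF this self_in_shuffles1[of "[c]"]] show ?thesis using v by simp
  next
    assume h: "u \<noteq> [] \<and> hd u = c \<and> w \<in> shuffles v (tl u)"
    then obtain u' where u: "u = c # u'" by (cases u) auto
    with h have "w \<in> shuffles v u'" by simp
    from Cons.IH[OF this] have "rev w \<in> shuffles (rev v) (rev u')" .
    from shuffles_append_mem[OF this self_in_shuffles2[of "[c]"]] show ?thesis using u by simp
  qed
qed

lemma map_shuffles_mem: "w \<in> shuffles v u \<Longrightarrow> map f w \<in> shuffles (map f v) (map f u)"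
proof (induction w arbitrary: v u)
  case Nil then show ?case by simp
next
  case (Cons c w)
  from Cons.prems[unfolded Cons_in_shuffles_iff] show ?case
  proof (elim disjE)
    assume h: "v \<noteq> [] \<and> hd v = c \<and> w \<in> shuffles (tl v) u"
    then obtain v' where v: "v = c # v'" by (cases v) auto
    with h have "w \<in> shuffles v' u" by simp
    from Cons.IH[OF this] show ?thesis using v by (simp add: Cons_in_shuffles_leftI)
  next
    assume h: "u \<noteq> [] \<and> hd u = c \<and> w \<in> shuffles v (tl u)"
    then obtain u' where u: "u = c # u'" by (cases u) auto
    with h have "w \<in> shuffles v u'" by simp
    from Cons.IH[OF this] show ?thesis using u by (simp add: Cons_in_shuffles_rightI)
  qed
qed

lemma transfer:
  fixes f :: "word \<Rightarrow> word"
  assumes inv: "\<And>w. f (f w) = w"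
    and sh: "\<And>w v u. w \<in> shuffles v u \<Longrightarrow> f w \<in> shuffles (f v) (f u)"
    and f0: "f [] = []"
    and W: "wqo_on (derives I) (lang_eps I)"
  shows "wqo_on (derives (f ` I)) (lang_eps (f ` I))"
proof -
  have st: "step (f ` I) v w \<longleftrightarrow> step I (f v) (f w)" for v w
  proof
    assume "step (f ` I) v w"
    then obtain u where u: "u \<in> I" "w \<in> shuffles v (f u)" unfolding step_iff by blast
    from sh[OF u(2)] have "f w \<in> shuffles (f v) u" using inv by simp
    then show "step I (f v) (f w)" using u(1) unfolding step_iff by blast
  next
    assume "step I (f v) (f w)"
    then obtain u where u: "u \<in> I" "f w \<in> shuffles (f v) u" unfolding step_iff by blast
    from sh[OF u(2)] have "w \<in> shuffles v (f u)" using inv by simp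
    then show "step (f ` I) v w" using u(1) unfolding step_iff by blast
  qed
  have d1: "derives I (f v) (f w)" if "derives (f ` I) v w" for v w
    using that unfolding derives_def
  proof (induction rule: rtranclp_induct)
    case base then show ?case by simp
  next
    case (step y z)
    then show ?case using st[of y z] by (simp add: rtranclp.rtrancl_into_rtrancl)
  qed
  have d2: "derives (f ` I) (f x) (f y)" if "derives I x y" for x y
    using that unfolding derives_def
  proof (induction rule: rtranclp_induct)
    case base then show ?case by simp
  next
    case (step y z)
    have "step (f ` I) (f y) (f z)" using st[of "f y" "f z"] step.hyps(2) inv by simp
    then show ?case using step.IH by (simp add: rtranclp.rtrancl_into_rtrancl)
  qed
  have dd: "derives (f ` I) v w \<longleftrightarrow> derives I (f v) (f w)" for v w
  proof
    assume "derives (f ` I) v w" then show "derives I (f v) (f w)" by (rule d1)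
  next
    assume "derives I (f v) (f w)"
    then have "derives (f ` I) (f (f v)) (f (f w))" by (rule d2)
    then show "derives (f ` I) v w" by (simp only: inv)
  qed
  have le: "w \<in> lang_eps (f ` I) \<longleftrightarrow> f w \<in> lang_eps I" for w
    unfolding lang_eps_def using dd[of "[]" w] f0 by simp
  show ?thesis unfolding wqo_on_def
  proof (intro conjI ballI allI impI)
    fix x show "derives (f ` I) x x" by simp
  next
    fix x y z assume "derives (f ` I) x y" "derives (f ` I) y z"
    then show "derives (f ` I) x z" by (rule derives_trans)
  next
    fix s :: "nat \<Rightarrow> word" assume s: "\<forall>i. s i \<in> lang_eps (f ` I)"
    then have fs: "\<forall>i. f (s i) \<in> lang_eps I" using le by blast
    have H: "\<forall>s :: nat \<Rightarrow> word. (\<forall>i. s i \<in> lang_eps I) \<longrightarrow> (\<exists>i j. i < j \<and> derives I (s i) (s j))"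
      using W unfolding wqo_on_def by blast
    have "\<exists>i j. i < j \<and> derives I (f (s i)) (f (s j))"
      using H[rule_format, of "\<lambda>i. f (s i)"] fs by blast
    then obtain i j where "i < j" "derives I (f (s i)) (f (s j))" by blast
    then show "\<exists>i j. i < j \<and> derives (f ` I) (s i) (s j)" using dd by blast
  qed
qed

lemma transfer_rev: "wqo_on (derives I) (lang_eps I) \<Longrightarrow> wqo_on (derives (rev ` I)) (lang_eps (rev ` I))"
  by (rule transfer) (auto intro: rev_shuffles_mem)

lemma transfer_sw: "wqo_on (derives I) (lang_eps I) \<Longrightarrow> wqo_on (derives (map sw ` I)) (lang_eps (map sw ` I))"
  by (rule transfer) (auto intro: map_shuffles_mem)

lemma transfer_rsw: "wqo_on (derives I) (lang_eps I) \<Longrightarrow>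
    wqo_on (derives ((\<lambda>w. rev (map sw w)) ` I)) (lang_eps ((\<lambda>w. rev (map sw w)) ` I))"
  by (rule transfer) (auto simp: rev_map intro: rev_shuffles_mem map_shuffles_mem)

lemma map_sw_rep[simp]: "map sw (replicate m c) = replicate m (sw c)" by simp

theorem proposition6:
  fixes n :: nat and I :: "word set"
  assumes "I \<in> {
    {replicate n a @ [b], [a]}, {replicate n a @ [b], [b]},
    {replicate n b @ [a], [a]}, {replicate n b @ [a], [b]},
    {[b] @ replicate n a, [a]}, {[b] @ replicate n a, [b]},
    {[a] @ replicate n b, [a]}, {[a] @ replicate n b, [b]},
    {replicate n a @ [b], replicate n a}, {[b] @ replicate n a, replicate n a},
    {replicate n b @ [a], replicate n b}, {[a] @ replicate n b, replicate n b}}"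
  shows "wqo_on (derives I) (lang_eps I)"
proof -
  have A: "wqo_on (derives {replicate n a @ [b], [a]}) (lang_eps {replicate n a @ [b], [a]})" by (rule caseA)
  have B: "wqo_on (derives {[a] @ replicate n b, [a]}) (lang_eps {[a] @ replicate n b, [a]})" by (rule caseB)
  have C: "wqo_on (derives {replicate n a @ [b], replicate n a}) (lang_eps {replicate n a @ [b], replicate n a})" by (rule caseC)
  have A1: "wqo_on (derives {[b] @ replicate n a, [a]}) (lang_eps {[b] @ replicate n a, [a]})"
    using transfer_rev[OF A] by (simp add: rev_replicate)
  have A2: "wqo_on (derives {replicate n b @ [a], [b]}) (lang_eps {replicate n b @ [a], [b]})"
    using transfer_sw[OF A] by simp
  have A3: "wqo_on (derives {[a] @ replicate n b, [b]}) (lang_eps {[a] @ replicate n b, [b]})"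
    using transfer_rsw[OF A] by (simp add: rev_replicate)
  have B1: "wqo_on (derives {replicate n b @ [a], [a]}) (lang_eps {replicate n b @ [a], [a]})"
    using transfer_rev[OF B] by (simp add: rev_replicate)
  have B2: "wqo_on (derives {[b] @ replicate n a, [b]}) (lang_eps {[b] @ replicate n a, [b]})"
    using transfer_sw[OF B] by simp
  have B3: "wqo_on (derives {replicate n a @ [b], [b]}) (lang_eps {replicate n a @ [b], [b]})"
    using transfer_rsw[OF B] by (simp add: rev_replicate)
  have C1: "wqo_on (derives {[b] @ replicate n a, replicate n a}) (lang_eps {[b] @ replicate n a, replicate n a})"
    using transfer_rev[OF C] by (simp add: rev_replicate)
  have C2: "wqo_on (derives {replicate n b @ [a], replicate n b}) (lang_eps {replicate n b @ [a], replicate n b})"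
    using transfer_sw[OF C] by simp
  have C3: "wqo_on (derives {[a] @ replicate n b, replicate n b}) (lang_eps {[a] @ replicate n b, replicate n b})"
    using transfer_rsw[OF C] by (simp add: rev_replicate)
  from assms show ?thesis
    using A A1 A2 A3 B B1 B2 B3 C C1 C2 C3 by (elim insertE) (simp_all only:, auto)
qed


end
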